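(* Let $(a^*,b^* ),(c^*,d^* )$ be a pair of distinct corners maximizing $\min_\pi f_{abcd}(\pi)$ over all pairs of distinct corners, and let $\pi_{a^*b^*c^*d^*}$ be the minimizer of $f_{a^*b^*c^*d^*}$. Then $\pi^*=\pi_{a^*b^*c^*d^*}$ is the (unique) solution of the minimax problem $$\min_{\pi\in\mathbb R}\max_{(\mu,\sigma)\in D}F(\pi,\mu,\sigma).$$
   Context: Let $0<\mu_-<\mu_+$ and $0<\sigma_-<\sigma_+$ be real numbers, $D=[\mu_-,\mu_+]\times[\sigma_-,\sigma_+]$, and $h_0,h_1\in\mathbb R$. For $\pi\in\mathbb R$ and $(\mu,\sigma)\in D$ put $F(\pi,\mu,\sigma)=(h_0-\pi\mu)^2+(h_1-\pi\sigma)^2$. For corners $(a,b),(c,d)\in\{-,+\}^2$ let $f_{ab}(\pi)=F(\pi,\mu_a,\sigma_b)$ and $f_{abcd}(\pi)=\max(f_{ab}(\pi),f_{cd}(\pi))$. *)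

theory Defs
  imports Complex_Main
begin

definition Fobj :: "real \<Rightarrow> real \<Rightarrow> real \<Rightarrow> real \<Rightarrow> real \<Rightarrow> real" where
  "Fobj h0 h1 p mu sigma = (h0 - p * mu)^2 + (h1 - p * sigma)^2"

text \<open>Corners of D are indexed by pairs of signs, encoded as bool (True = +, False = -).\<close>
definition sel :: "real \<Rightarrow> real \<Rightarrow> bool \<Rightarrow> real" where
  "sel lo hi s = (if s then hi else lo)"

definition fcorner :: "real \<Rightarrow> real \<Rightarrow> real \<Rightarrow> real \<Rightarrow> real \<Rightarrow> real \<Rightarrow> bool \<times> bool \<Rightarrow> real \<Rightarrow> real" where
  "fcorner mum mup sgm sgp h0 h1 c p = Fobj h0 h1 p (sel mum mup (fst c)) (sel sgm sgp (snd c))"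

definition fpair :: "real \<Rightarrow> real \<Rightarrow> real \<Rightarrow> real \<Rightarrow> real \<Rightarrow> real \<Rightarrow> bool \<times> bool \<Rightarrow> bool \<times> bool \<Rightarrow> real \<Rightarrow> real" where
  "fpair mum mup sgm sgp h0 h1 c d p =
     max (fcorner mum mup sgm sgp h0 h1 c p) (fcorner mum mup sgm sgp h0 h1 d p)"

end

theory Submission imports Defs "HOL-Analysis.Analysis" begin
lemma conv_F:
  assumes "0 \<le> l" "l \<le> 1"
  shows "Fobj h0 h1 ((1-l)*a + l*b) mu sg \<le> (1-l)*Fobj h0 h1 a mu sg + l*Fobj h0 h1 b mu sg"
proof -
  have "(1-l)*Fobj h0 h1 a mu sg + l*Fobj h0 h1 b mu sg - Fobj h0 h1 ((1-l)*a + l*b) mu sg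
        = l*(1-l)*(b-a)^2*(mu^2+sg^2)"
    unfolding Fobj_def by (simp add: algebra_simps power2_eq_square)
  moreover have "l*(1-l)*(b-a)^2*(mu^2+sg^2) \<ge> 0" using assms by simp
  ultimately show ?thesis by linarith
qed

lemma quasi_F:
  assumes "a \<le> x" "x \<le> b"
  shows "Fobj h0 h1 x mu sg \<le> max (Fobj h0 h1 a mu sg) (Fobj h0 h1 b mu sg)"
proof (cases "a = b")
  case True thus ?thesis using assms by simp
next
  case False
  hence ab: "a < b" using assms by simp
  define l where "l = (x-a)/(b-a)"
  have l0: "0 \<le> l" "l \<le> 1" using assms ab by (auto simp: l_def field_simps)
  have "l*(b-a) = x - a" using ab by (simp add: l_def)
  hence x: "x = (1-l)*a + l*b" by (simp add: algebra_simps)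
  have "Fobj h0 h1 x mu sg \<le> (1-l)*Fobj h0 h1 a mu sg + l*Fobj h0 h1 b mu sg"
    using conv_F[OF l0] x by simp
  also have "\<dots> \<le> (1-l)*max (Fobj h0 h1 a mu sg) (Fobj h0 h1 b mu sg) + l*max (Fobj h0 h1 a mu sg) (Fobj h0 h1 b mu sg)"
    by (intro add_mono mult_left_mono) (use l0 in auto)
  finally show ?thesis by (simp add: algebra_simps)
qed

lemma strict_F:
  assumes "a \<noteq> b" "0 < mu"
  shows "Fobj h0 h1 ((a+b)/2) mu sg < (Fobj h0 h1 a mu sg + Fobj h0 h1 b mu sg)/2"
proof -
  have "(Fobj h0 h1 a mu sg + Fobj h0 h1 b mu sg)/2 - Fobj h0 h1 ((a+b)/2) mu sg
        = (b-a)^2*(mu^2+sg^2)/4"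
    unfolding Fobj_def by (simp add: algebra_simps power2_eq_square field_simps)
  moreover have "(b-a)^2*(mu^2+sg^2)/4 > 0" using assms
    by (intro divide_pos_pos mult_pos_pos) (auto simp: add_pos_nonneg)
  ultimately show ?thesis by linarith
qed

lemma sq_quasi:
  fixes h k x a b :: real
  assumes "a \<le> x" "x \<le> b"
  shows "(h - k*x)^2 \<le> max ((h - k*a)^2) ((h - k*b)^2)"
proof -
  have "(h - k*x)^2 \<le> (1 - ((x-a)/(b-a)))*(h - k*a)^2 + ((x-a)/(b-a))*(h-k*b)^2" if "a < b"
  proof -
    define l where "l = (x-a)/(b-a)"
    have l0: "0 \<le> l" "l \<le> 1" using assms that by (auto simp: l_def field_simps)
    have "l*(b-a) = x - a" using that by (simp add: l_def)
    hence x: "x = (1-l)*a + l*b" by (simp add: algebra_simps)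
    have "(1-l)*(h - k*a)^2 + l*(h-k*b)^2 - (h - k*x)^2 = l*(1-l)*(k*(b-a))^2"
      unfolding x by (simp add: algebra_simps power2_eq_square)
    moreover have "l*(1-l)*(k*(b-a))^2 \<ge> 0" using l0 by simp
    ultimately show ?thesis unfolding l_def by linarith
  qed
  moreover have "(1 - ((x-a)/(b-a)))*(h - k*a)^2 + ((x-a)/(b-a))*(h-k*b)^2 \<le> max ((h - k*a)^2) ((h - k*b)^2)" if "a < b"
  proof -
    define l where "l = (x-a)/(b-a)"
    have l0: "0 \<le> l" "l \<le> 1" using assms that by (auto simp: l_def field_simps)
    have "(1-l)*(h - k*a)^2 + l*(h-k*b)^2 \<le> (1-l)*max ((h - k*a)^2) ((h - k*b)^2) + l*max ((h - k*a)^2) ((h - k*b)^2)"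
      by (intro add_mono mult_left_mono) (use l0 in auto)
    thus ?thesis unfolding l_def by (simp add: algebra_simps)
  qed
  ultimately show ?thesis using assms
  proof (cases "a < b")
    case False hence "x = a" using assms by simp
    thus ?thesis by simp
  qed (meson order_trans)
qed

lemma attain:
  fixes h :: "real \<Rightarrow> real"
  assumes "continuous_on UNIV h" "\<forall>p. R \<le> \<bar>p\<bar> \<longrightarrow> h 0 \<le> h p"
  shows "\<exists>q. \<forall>p. h q \<le> h p"
proof -
  obtain q where q: "q \<in> {-\<bar>R\<bar>..\<bar>R\<bar>}" "\<forall>y\<in>{-\<bar>R\<bar>..\<bar>R\<bar>}. h q \<le> h y"
  proof -
    have "continuous_on {-\<bar>R\<bar>..\<bar>R\<bar>} h" using assms(1) by (rule continuous_on_subset) auto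
    moreover have "compact {-\<bar>R\<bar>..\<bar>R\<bar>}" by simp
    moreover have "{-\<bar>R\<bar>..\<bar>R\<bar>} \<noteq> {}" by simp
    ultimately show ?thesis using continuous_attains_inf[of "{-\<bar>R\<bar>..\<bar>R\<bar>}" h] that by blast
  qed
  have "h q \<le> h 0" using q by auto
  show ?thesis
  proof (intro exI allI)
    fix p show "h q \<le> h p"
    proof (cases "p \<in> {-\<bar>R\<bar>..\<bar>R\<bar>}")
      case True thus ?thesis using q by auto
    next
      case False hence "R \<le> \<bar>p\<bar>" by auto
      thus ?thesis using assms(2) \<open>h q \<le> h 0\<close> by fastforce
    qed
  qed
qed

lemma sel_pos: "0 < lo \<Longrightarrow> lo < hi \<Longrightarrow> lo \<le> sel lo hi s \<and> sel lo hi s \<le> hi"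
  by (simp add: sel_def)

lemma pair_attain:
  assumes "0 < mum" "mum < mup"
  shows "\<exists>q. \<forall>p. fpair mum mup sgm sgp h0 h1 c d q \<le> fpair mum mup sgm sgp h0 h1 c d p"
proof -
  let ?h = "fpair mum mup sgm sgp h0 h1 c d"
  have cont: "continuous_on UNIV ?h"
    unfolding fpair_def fcorner_def Fobj_def by (intro continuous_intros)
  define R where "R = (\<bar>h0\<bar> + ?h 0 + 1) / mum"
  have h0nn: "0 \<le> ?h 0" unfolding fpair_def fcorner_def Fobj_def by (simp add: le_max_iff_disj)
  have "?h 0 \<le> ?h p" if "R \<le> \<bar>p\<bar>" for p
  proof -
    define mu where "mu = sel mum mup (fst c)"
    have mu: "mum \<le> mu" using sel_pos[OF assms] mu_def by blast
    have "R * mum = \<bar>h0\<bar> + ?h 0 + 1" using assms(1) by (simp add: R_def)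
    moreover have "R * mum \<le> \<bar>p\<bar> * mum" using that assms(1) by (simp add: mult_right_mono)
    ultimately have "\<bar>h0\<bar> + ?h 0 + 1 \<le> \<bar>p\<bar> * mum" by simp
    also have "\<dots> \<le> \<bar>p\<bar> * mu" using mu by (simp add: mult_left_mono)
    also have "\<dots> = \<bar>p*mu\<bar>" using mu assms by (simp add: abs_mult)
    finally have "?h 0 + 1 \<le> \<bar>h0 - p*mu\<bar>" by linarith
    hence y1: "?h 0 + 1 \<le> \<bar>h0 - p*mu\<bar>" "1 \<le> \<bar>h0 - p*mu\<bar>" using h0nn by linarith+
    have "\<bar>h0 - p*mu\<bar> \<le> \<bar>h0 - p*mu\<bar> * \<bar>h0 - p*mu\<bar>"
      using mult_left_mono[OF y1(2), of "\<bar>h0 - p*mu\<bar>"] by simp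
    also have "\<dots> = (h0 - p*mu)^2" by (simp add: power2_eq_square abs_mult_self_eq)
    finally have "?h 0 + 1 \<le> (h0 - p*mu)^2" using y1(1) by linarith
    also have "\<dots> \<le> fcorner mum mup sgm sgp h0 h1 c p"
      unfolding fcorner_def Fobj_def mu_def by simp
    also have "\<dots> \<le> ?h p" unfolding fpair_def by simp
    finally show ?thesis by simp
  qed
  thus ?thesis by (intro attain[OF cont, of R]) auto
qed

lemma max_sum4:
  fixes x y a b c d :: real
  assumes "x \<le> max a b" "y \<le> max c d"
  shows "x + y \<le> max (max (a+c) (a+d)) (max (b+c) (b+d))"
  using assms unfolding max_def by (auto split: if_splits)

lemma corner_bound:
  assumes "mum \<le> mu" "mu \<le> mup" "sgm \<le> sig" "sig \<le> sgp"
  shows "Fobj h0 h1 p mu sig \<le> max (max (fcorner mum mup sgm sgp h0 h1 (False,False) p) (fcorner mum mup sgm sgp h0 h1 (False,True) p))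
                                 (max (fcorner mum mup sgm sgp h0 h1 (True,False) p) (fcorner mum mup sgm sgp h0 h1 (True,True) p))"
proof -
  have a: "(h0 - p*mu)^2 \<le> max ((h0 - p*mum)^2) ((h0 - p*mup)^2)" using sq_quasi assms by blast
  have b: "(h1 - p * sig)^2 \<le> max ((h1 - p * sgm)^2) ((h1 - p * sgp)^2)" using sq_quasi assms by blast
  show ?thesis using max_sum4[OF a b] unfolding fcorner_def Fobj_def sel_def by simp
qed

theorem mainTheorem13:
  fixes mum mup sgm sgp h0 h1 :: real
    and cs ds :: "bool \<times> bool"
    and ps :: real
  defines "D \<equiv> {mum..mup} \<times> {sgm..sgp}"
  defines "f \<equiv> fpair mum mup sgm sgp h0 h1"
  assumes "0 < mum" "mum < mup" "0 < sgm" "sgm < sgp"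
    and distinct: "cs \<noteq> ds"
    and maximizing: "\<forall>c d. c \<noteq> d \<longrightarrow> (INF p. f c d p) \<le> (INF p. f cs ds p)"
    and minimizer: "\<forall>p. f cs ds ps \<le> f cs ds p"
  shows "(\<forall>p. (SUP x\<in>D. Fobj h0 h1 ps (fst x) (snd x)) \<le> (SUP x\<in>D. Fobj h0 h1 p (fst x) (snd x)))
       \<and> (\<forall>p. (SUP x\<in>D. Fobj h0 h1 p (fst x) (snd x)) \<le> (SUP x\<in>D. Fobj h0 h1 ps (fst x) (snd x)) \<longrightarrow> p = ps)"
proof -
  define E where "E = fcorner mum mup sgm sgp h0 h1"
  define V where "V = f cs ds ps"
  have fE: "f c d p = max (E c p) (E d p)" for c d p unfolding f_def E_def fpair_def by simp
  have Epos: "\<exists>mu sg. 0 < mu \<and> E c = (\<lambda>p. Fobj h0 h1 p mu sg)" for c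
  proof -
    have "0 < sel mum mup (fst c)" using sel_pos[OF assms(3,4), of "fst c"] assms(3) by linarith
    thus ?thesis unfolding E_def fcorner_def by blast
  qed
  have quasi: "a \<le> x \<Longrightarrow> x \<le> b \<Longrightarrow> E c x \<le> max (E c a) (E c b)" for a x b c
    using Epos[of c] quasi_F by fastforce
  have strict: "a \<noteq> b \<Longrightarrow> E c ((a+b)/2) < (E c a + E c b)/2" for a b c
    using Epos[of c] strict_F by fastforce
  have bddb: "bdd_below (range (f c d))" for c d
    by (rule bdd_belowI[of _ 0]) (auto simp: fE E_def fcorner_def Fobj_def le_max_iff_disj)
  have infmin: "(INF p. f c d p) = f c d q" if "\<forall>p. f c d q \<le> f c d p" for c d q
  proof (rule antisym)
    show "(INF p. f c d p) \<le> f c d q" by (rule cINF_lower[OF bddb]) simp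
    show "f c d q \<le> (INF p. f c d p)" by (rule cINF_greatest) (use that in auto)
  qed
  have INFV: "(INF p. f cs ds p) = V" unfolding V_def by (rule infmin) (use minimizer in auto)
  have uniq: "u = ps" if "f cs ds u \<le> V" for u
  proof (rule ccontr)
    assume ne: "u \<noteq> ps"
    have "E cs ((u+ps)/2) < V" using strict[OF ne, of cs] that fE[of cs ds] V_def by fastforce
    moreover have "E ds ((u+ps)/2) < V" using strict[OF ne, of ds] that fE[of cs ds] V_def by fastforce
    ultimately have "f cs ds ((u+ps)/2) < f cs ds ps" using fE V_def by simp
    thus False using minimizer by (meson not_le)
  qed
  have allV: "E e ps \<le> V" for e
  proof (rule ccontr)
    assume big: "\<not> E e ps \<le> V"
    have "e \<noteq> cs" "e \<noteq> ds" using big fE V_def by (auto simp: le_max_iff_disj)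
    obtain q where q: "\<forall>p. f e cs q \<le> f e cs p" using pair_attain[OF assms(3,4)] f_def by blast
    obtain r where r: "\<forall>p. f e ds r \<le> f e ds p" using pair_attain[OF assms(3,4)] f_def by blast
    have "(INF p. f e cs p) = f e cs q"
      by (rule infmin) (use q in auto)
    hence qV: "f e cs q \<le> V" using maximizing \<open>e \<noteq> cs\<close> INFV by metis
    have "(INF p. f e ds p) = f e ds r"
      by (rule infmin) (use r in auto)
    hence rV: "f e ds r \<le> V" using maximizing \<open>e \<noteq> ds\<close> INFV by metis
    have q1: "E e q \<le> V" "E cs q \<le> V" and r1: "E e r \<le> V" "E ds r \<le> V" using qV rV fE by auto
    have p1: "E cs ps \<le> V" "E ds ps \<le> V" using fE V_def by auto
    have "q \<noteq> ps" "r \<noteq> ps" using q1 r1 big by auto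
    show False
    proof (cases "q < ps")
      case qlt: True
      show False
      proof (cases "r < ps")
        case True
        define u where "u = max q r"
        have "E cs u \<le> V" using quasi[of q u ps cs] q1 p1 qlt True by (auto simp: u_def)
        moreover have "E ds u \<le> V" using quasi[of r u ps ds] r1 p1 qlt True by (auto simp: u_def)
        ultimately have "u = ps" using uniq fE by simp
        thus False using qlt True u_def by simp
      next
        case False
        thus False using quasi[of q ps r e] q1 r1 qlt big by simp
      qed
    next
      case qge: False
      hence qgt: "ps < q" using \<open>q \<noteq> ps\<close> by simp
      show False
      proof (cases "r < ps")
        case True
        thus False using quasi[of r ps q e] q1 r1 qgt big by simp
      next
        case False
        hence rgt: "ps < r" using \<open>r \<noteq> ps\<close> by simp
        define u where "u = min q r"
        have "E cs u \<le> V" using quasi[of ps u q cs] q1 p1 qgt rgt by (auto simp: u_def)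
        moreover have "E ds u \<le> V" using quasi[of ps u r ds] r1 p1 qgt rgt by (auto simp: u_def)
        ultimately have "u = ps" using uniq fE by simp
        thus False using qgt rgt u_def by simp
      qed
    qed
  qed
  define G where "G p = (SUP x\<in>D. Fobj h0 h1 p (fst x) (snd x))" for p
  have Dne: "D \<noteq> {}" using assms unfolding D_def by auto
  have bnd: "x \<in> D \<Longrightarrow> Fobj h0 h1 p (fst x) (snd x) \<le> max (max (E (False,False) p) (E (False,True) p)) (max (E (True,False) p) (E (True,True) p))" for x p
    unfolding E_def D_def by (cases x) (auto intro: corner_bound)
  have bdd: "bdd_above ((\<lambda>x. Fobj h0 h1 p (fst x) (snd x)) ` D)" for p
    using bnd by (intro bdd_aboveI) blast
  have Gge: "E c p \<le> G p" for c p
  proof -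
    have "(sel mum mup (fst c), sel sgm sgp (snd c)) \<in> D"
      using sel_pos[OF assms(3,4)] sel_pos[OF assms(5,6)] unfolding D_def by auto
    from cSUP_upper[OF this bdd] show ?thesis unfolding G_def E_def fcorner_def by simp
  qed
  have Gps: "G ps \<le> V"
    unfolding G_def
  proof (rule cSUP_least[OF Dne])
    fix x assume "x \<in> D"
    have "max (max (E (False,False) ps) (E (False,True) ps)) (max (E (True,False) ps) (E (True,True) ps)) \<le> V"
      using allV by simp
    with bnd[OF \<open>x \<in> D\<close>, of ps] show "Fobj h0 h1 ps (fst x) (snd x) \<le> V" by linarith
  qed
  have fG: "f cs ds p \<le> G p" for p using fE Gge by simp
  have "V \<le> f cs ds p" for p using minimizer V_def by simp
  hence A: "G ps \<le> G p" for p using Gps fG[of p] by (meson order_trans)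
  have B: "G p \<le> G ps \<Longrightarrow> p = ps" for p using uniq fG[of p] Gps by (meson order_trans)
  show ?thesis using A B unfolding G_def by blast
qed

end
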